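(* Let $f_1,f_2$ be odd entire functions with $f_1'(0)\neq0$ and $f_2'(0)\neq0$, each satisfying $$(f'(0))^3 f(2z)=f(z)^4\,(\ln f(z))''' \quad\text{for all } z$$ (where $(\ln f)'''=(f'/f)''$). If $f_2-f_1$ vanishes to order at least $9$ at $z=0$, then $f_2=f_1$ identically.
   Context: Vanishing to order at least $9$ at $0$ means the Taylor coefficients of degrees $0,\dots,8$ at $0$ are zero (the paper writes $f_2\equiv f_1\bmod\mathcal{M}^9$, $\mathcal{M}$ the ideal of entire functions vanishing at $0$). *)

theory Defs
  imports "HOL-Complex_Analysis.Complex_Analysis"
begin

text \<open>The functional equation (f'(0))^3 f(2z) = f(z)^4 (ln f)'''(z), with
  (ln f)''' = (f'/f)''. The right-hand side is literally defined where f z \<noteq> 0.\<close>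
definition lemma5_eq :: "(complex \<Rightarrow> complex) \<Rightarrow> bool" where
  "lemma5_eq f \<longleftrightarrow> (\<forall>z. f z \<noteq> 0 \<longrightarrow>
     (deriv f 0) ^ 3 * f (2 * z) = f z ^ 4 * deriv (deriv (\<lambda>w. deriv f w / f w)) z)"

end

theory Submission imports Defs begin

lemma ent_deriv:
  assumes "g holomorphic_on UNIV"
  shows "(g has_field_derivative deriv g z) (at z)"
  using holomorphic_derivI[OF assms open_UNIV UNIV_I] .

lemma ent_deriv_holo:
  assumes "g holomorphic_on UNIV"
  shows "deriv g holomorphic_on UNIV"
  using holomorphic_deriv[OF assms open_UNIV] .

lemma third_log_deriv:
  fixes f :: "complex \<Rightarrow> complex"
  assumes hol: "f holomorphic_on UNIV" and nz: "f z \<noteq> 0"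
  shows "f z ^ 4 * deriv (deriv (\<lambda>w. deriv f w / f w)) z =
     f z ^ 3 * deriv (deriv (deriv f)) z - 3 * f z ^ 2 * deriv f z * deriv (deriv f) z
     + 2 * f z * deriv f z ^ 3"
proof -
  define f1 where "f1 = deriv f"
  define f2 where "f2 = deriv f1"
  define f3 where "f3 = deriv f2"
  have h1: "f1 holomorphic_on UNIV" unfolding f1_def by (rule ent_deriv_holo[OF hol])
  have h2: "f2 holomorphic_on UNIV" unfolding f2_def by (rule ent_deriv_holo[OF h1])
  have d0: "\<And>w. (f has_field_derivative f1 w) (at w)" unfolding f1_def by (rule ent_deriv[OF hol])
  have d1: "\<And>w. (f1 has_field_derivative f2 w) (at w)" unfolding f2_def by (rule ent_deriv[OF h1])
  have d2: "\<And>w. (f2 has_field_derivative f3 w) (at w)" unfolding f3_def by (rule ent_deriv[OF h2])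
  have contf: "continuous_on UNIV f" using hol holomorphic_on_imp_continuous_on by blast
  have opn: "open {w. f w \<noteq> 0}"
    using continuous_open_preimage[OF contf open_UNIV, of "-{0}"] by (simp add: vimage_def open_Compl)
  have ev: "eventually (\<lambda>w. f w \<noteq> 0) (nhds z)"
    using eventually_nhds_in_open[OF opn] nz by simp
  define h where "h = (\<lambda>w. (f2 w * f w - f1 w * f1 w) / (f w * f w))"
  have "eventually (\<lambda>w. deriv (\<lambda>w. f1 w / f w) w = h w) (nhds z)"
    using ev
  proof eventually_elim
    case (elim w)
    show ?case unfolding h_def
      by (rule DERIV_imp_deriv) (rule DERIV_divide[OF d1 d0 elim])
  qed
  hence "deriv (deriv (\<lambda>w. f1 w / f w)) z = deriv h z"
    by (rule deriv_cong_ev) simp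
  also have "deriv h z = ((f3 z * f z + f2 z * f1 z - (f2 z * f1 z + f1 z * f2 z)) * (f z * f z)
       - (f2 z * f z - f1 z * f1 z) * (f1 z * f z + f z * f1 z)) / (f z * f z * (f z * f z))"
    unfolding h_def
    by (rule DERIV_imp_deriv, rule DERIV_divide)
       (auto intro!: derivative_eq_intros d0 d1 d2 simp: nz)
  finally have "deriv (deriv (\<lambda>w. f1 w / f w)) z = ((f3 z * f z + f2 z * f1 z - (f2 z * f1 z + f1 z * f2 z)) * (f z * f z)
       - (f2 z * f z - f1 z * f1 z) * (f1 z * f z + f z * f1 z)) / (f z * f z * (f z * f z))" .
  then show ?thesis unfolding f1_def[symmetric] f2_def[symmetric] f3_def[symmetric]
    using nz by (simp add: field_simps power2_eq_square power3_eq_cube power4_eq_xxxx)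
qed

lemma single:
  fixes f :: "complex \<Rightarrow> complex"
  assumes hol: "f holomorphic_on UNIV" and odd: "\<And>z. f (- z) = - f z"
    and nz: "deriv f 0 \<noteq> 0" and eq: "lemma5_eq f"
  defines "F \<equiv> fps_expansion f 0"
  shows "f has_fps_expansion F" "fps_nth F 0 = 0" "fps_nth F 1 = deriv f 0" "fps_nth F 2 = 0"
    "fps_const (deriv f 0 ^ 3) * Abs_fps (\<lambda>n. 2 ^ n * fps_nth F n) =
       F ^ 3 * fps_deriv (fps_deriv (fps_deriv F)) - 3 * F ^ 2 * fps_deriv F * fps_deriv (fps_deriv F)
       + 2 * F * fps_deriv F ^ 3"
proof -
  show fF: "f has_fps_expansion F" unfolding F_def
    by (rule has_fps_expansion_fps_expansion[OF open_UNIV UNIV_I hol])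
  have lin: "\<And>c::complex. (\<lambda>z. c * z) has_fps_expansion fps_const c * fps_X"
    by (rule has_fps_expansion_cmult_left[OF has_fps_expansion_fps_X])
  have comp: "\<And>c. (\<lambda>z. f (c * z)) has_fps_expansion Abs_fps (\<lambda>n. c ^ n * fps_nth F n)"
  proof -
    fix c :: complex
    have "(f \<circ> (\<lambda>z. c * z)) has_fps_expansion fps_compose F (fps_const c * fps_X)"
      by (rule has_fps_expansion_compose[OF fF lin]) simp
    thus "(\<lambda>z. f (c * z)) has_fps_expansion Abs_fps (\<lambda>n. c ^ n * fps_nth F n)"
      by (simp add: fps_compose_linear o_def)
  qed
  have "(\<lambda>z. f ((-1) * z)) = (\<lambda>z. - f z)" using odd by simp
  hence "(\<lambda>z. - f z) has_fps_expansion Abs_fps (\<lambda>n. (-1) ^ n * fps_nth F n)" using comp[of "-1"] by simp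
  moreover have "(\<lambda>z. - f z) has_fps_expansion - F" by (intro fps_expansion_intros fF)
  ultimately have oddF: "Abs_fps (\<lambda>n. (-1) ^ n * fps_nth F n) = - F" by (rule fps_expansion_unique_complex)
  have "fps_nth F 0 = - fps_nth F 0" using arg_cong[OF oddF, of "\<lambda>G. fps_nth G 0"] by simp
  thus F0: "fps_nth F 0 = 0" by simp
  have "fps_nth F 2 = - fps_nth F 2" using arg_cong[OF oddF, of "\<lambda>G. fps_nth G 2"] by simp
  thus "fps_nth F 2 = 0" by simp
  show F1: "fps_nth F 1 = deriv f 0" using fps_nth_fps_expansion[OF fF, of 1] by simp
  have f0: "f 0 = 0" using has_fps_expansion_imp_0_eq_fps_nth_0[OF fF] F0 by simp
  define a where "a = deriv f 0"
  have "((\<lambda>y. (f y - f 0) / (y - 0)) \<longlongrightarrow> a) (at 0)"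
    using ent_deriv[OF hol, of 0] unfolding a_def has_field_derivative_iff .
  hence "eventually (\<lambda>y. (f y - f 0) / (y - 0) \<noteq> 0) (at 0)"
    by (rule tendsto_imp_eventually_ne) (simp add: a_def nz)
  hence evnz: "eventually (\<lambda>y. f y \<noteq> 0) (at 0)" by eventually_elim (auto simp: f0)
  define P where "P = (\<lambda>z. f z ^ 3 * deriv (deriv (deriv f)) z - 3 * f z ^ 2 * deriv f z * deriv (deriv f) z
     + 2 * f z * deriv f z ^ 3)"
  have "eventually (\<lambda>z. z \<noteq> 0 \<longrightarrow> f z \<noteq> 0) (nhds 0)" using evnz by (simp add: eventually_at_filter)
  hence evP: "eventually (\<lambda>z. a ^ 3 * f (2 * z) = P z) (nhds 0)"
  proof eventually_elim
    case (elim z)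
    show ?case
    proof (cases "z = 0")
      case True thus ?thesis by (simp add: P_def f0)
    next
      case False
      hence "f z \<noteq> 0" using elim by simp
      thus ?thesis using eq third_log_deriv[OF hol, of z] unfolding lemma5_eq_def P_def a_def by metis
    qed
  qed
  have "(\<lambda>z. a ^ 3 * f (2 * z)) has_fps_expansion fps_const (a ^ 3) * Abs_fps (\<lambda>n. 2 ^ n * fps_nth F n)"
    by (intro fps_expansion_intros comp)
  moreover have "P has_fps_expansion F ^ 3 * fps_deriv (fps_deriv (fps_deriv F)) - 3 * F ^ 2 * fps_deriv F * fps_deriv (fps_deriv F)
       + 2 * F * fps_deriv F ^ 3" unfolding P_def
    by (intro fps_expansion_intros fF)
  ultimately show "fps_const (deriv f 0 ^ 3) * Abs_fps (\<lambda>n. 2 ^ n * fps_nth F n) =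
       F ^ 3 * fps_deriv (fps_deriv (fps_deriv F)) - 3 * F ^ 2 * fps_deriv F * fps_deriv (fps_deriv F)
       + 2 * F * fps_deriv F ^ 3" unfolding a_def[symmetric]
    using has_fps_expansion_cong[OF evP refl] fps_expansion_unique_complex by blast
qed



lemma ring_id:
  fixes X W H B K E G G1 G2 G3 :: "'a::comm_ring_1"
  defines "P \<equiv> \<lambda>A B C E. A ^ 3 * E - 3 * A ^ 2 * B * C + 2 * A * B ^ 3"
  shows "P (X * H + X ^ 6 * W * G) (B + X ^ 5 * W * G1) (X * K + X ^ 4 * W * G2) (E + X ^ 3 * W * G3)
       - P (X * H) B (X * K) E =
     X ^ 6 * W * (
       (H + X ^ 5 * W * G) ^ 3 * G3
       + G * ((X * H + X ^ 6 * W * G) ^ 2 + (X * H + X ^ 6 * W * G) * (X * H) + (X * H) ^ 2) * E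
       - 3 * ((H + X ^ 5 * W * G) ^ 2 * (B + X ^ 5 * W * G1) * G2
              + X ^ 2 * (H + X ^ 5 * W * G) ^ 2 * K * G1
              + G * ((X * H + X ^ 6 * W * G) + X * H) * B * (X * K))
       + 2 * ((H + X ^ 5 * W * G) * G1 * ((B + X ^ 5 * W * G1) ^ 2 + (B + X ^ 5 * W * G1) * B + B ^ 2)
              + G * B ^ 3))"
  unfolding P_def by (simp add: eval_nat_numeral algebra_simps)

lemma nat_ineq: "(n+7)*(n+8)*(n+9) + 6*(n+9) + 2 < 2^(n+9) + 3*(n+8)*((n::nat)+9)"
proof (induction n)
  case 0 then show ?case by simp
next
  case (Suc n)
  define A where "A = (n+7)*(n+8)*(n+9)"
  define p where "p = (n+8)*(n+9)"
  define c where "c = (Suc n+7)*(Suc n+8)*(Suc n+9)"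
  define q where "q = (Suc n+8)*(Suc n+9)"
  have h1: "A + 6*(n+9) + 2 < 2^(n+9) + 3*p" using Suc.IH unfolding A_def p_def mult.assoc by assumption
  have h2: "c + 6*(Suc n+9) + 2 + 6*p \<le> 2*(A + 6*(n+9) + 2) + 3*q"
    unfolding A_def p_def c_def q_def by (simp add: algebra_simps)
  have h3: "(2::nat)^(Suc n+9) = 2*2^(n+9)" by (metis add_Suc power_Suc)
  have h4: "c + 6*(Suc n+9) + 2 < 2*t + 3*q" if "A + 6*(n+9) + 2 < t + 3*p" for t::nat
    using h2 that by presburger
  have "c + 6*(Suc n+9) + 2 < 2^(Suc n+9) + 3*q" unfolding h3 by (rule h4[OF h1])
  thus ?case unfolding c_def q_def mult.assoc by assumption
qed

lemma shift_decomp: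
  fixes A :: "'a::comm_ring_1 fps"
  assumes "\<And>k. k < j \<Longrightarrow> fps_nth A k = 0"
  shows "A = fps_X ^ j * fps_shift j A"
  by (auto simp: fps_eq_iff fps_X_power_mult_nth assms)

definition PP :: "complex fps \<Rightarrow> complex fps" where
  "PP F = F ^ 3 * fps_deriv (fps_deriv (fps_deriv F)) - 3 * F ^ 2 * fps_deriv F * fps_deriv (fps_deriv F)
       + 2 * F * fps_deriv F ^ 3"

definition P4 :: "complex fps \<Rightarrow> complex fps \<Rightarrow> complex fps \<Rightarrow> complex fps \<Rightarrow> complex fps" where
  "P4 A B C E = A ^ 3 * E - 3 * A ^ 2 * B * C + 2 * A * B ^ 3"

lemma PP_P4: "PP F = P4 F (fps_deriv F) (fps_deriv (fps_deriv F)) (fps_deriv (fps_deriv (fps_deriv F)))"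
  unfolding PP_def P4_def by simp

lemma P4_cong: "A = A' \<Longrightarrow> B = B' \<Longrightarrow> C = C' \<Longrightarrow> E = E' \<Longrightarrow> P4 A B C E = P4 A' B' C' E'"
  by simp

lemma alg:
  fixes F1 F2 :: "complex fps" and a :: complex
  assumes F10: "fps_nth F1 0 = 0" and F11: "fps_nth F1 1 = a" and F12: "fps_nth F1 2 = 0"
    and anz: "a \<noteq> 0"
    and e1: "fps_const (a ^ 3) * Abs_fps (\<lambda>n. 2 ^ n * fps_nth F1 n) = PP F1"
    and e2: "fps_const (a ^ 3) * Abs_fps (\<lambda>n. 2 ^ n * fps_nth F2 n) = PP F2"
    and low: "\<And>k. k \<le> 8 \<Longrightarrow> fps_nth F2 k = fps_nth F1 k"
  shows "F2 = F1"
proof (rule ccontr)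
  assume ne: "F2 \<noteq> F1"
  define D where "D = F2 - F1"
  have Dnz: "D \<noteq> 0" using ne by (simp add: D_def)
  define m where "m = subdegree D"
  define c where "c = fps_nth D m"
  have cnz: "c \<noteq> 0" unfolding c_def m_def using Dnz by simp
  have "\<not> m \<le> 8"
  proof
    assume "m \<le> 8"
    hence "c = 0" unfolding c_def D_def using low by simp
    thus False using cnz by simp
  qed
  define n where "n = m - 9"
  have mn: "m = n + 9" using \<open>\<not> m \<le> 8\<close> by (simp add: n_def)
  have lowD: "\<And>k. k < n + 9 \<Longrightarrow> fps_nth D k = 0"
    by (rule nth_less_subdegree_zero) (simp add: mn[symmetric] m_def)
  define G where "G = fps_shift (n+9) D"
  have DG: "D = fps_X ^ (n+9) * G" unfolding G_def by (rule shift_decomp[OF lowD])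
  have G0: "fps_nth G 0 = c" by (simp add: G_def c_def mn)
  define G1 where "G1 = fps_shift (n+8) (fps_deriv D)"
  have D1G: "fps_deriv D = fps_X ^ (n+8) * G1" unfolding G1_def
    by (rule shift_decomp) (simp add: lowD)
  have G10: "fps_nth G1 0 = of_nat (n+9) * c" by (simp add: G1_def c_def mn add_ac)
  define G2 where "G2 = fps_shift (n+7) (fps_deriv (fps_deriv D))"
  have D2G: "fps_deriv (fps_deriv D) = fps_X ^ (n+7) * G2" unfolding G2_def
    by (rule shift_decomp) (simp add: lowD)
  have G20: "fps_nth G2 0 = of_nat (n+8) * (of_nat (n+9) * c)" by (simp add: G2_def c_def mn add_ac)
  define G3 where "G3 = fps_shift (n+6) (fps_deriv (fps_deriv (fps_deriv D)))"
  have D3G: "fps_deriv (fps_deriv (fps_deriv D)) = fps_X ^ (n+6) * G3" unfolding G3_def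
    by (rule shift_decomp) (simp add: lowD)
  have G30: "fps_nth G3 0 = of_nat (n+7) * (of_nat (n+8) * (of_nat (n+9) * c))"
    by (simp add: G3_def c_def mn add_ac)
  define H where "H = fps_shift 1 F1"
  have FH: "F1 = fps_X * H" unfolding H_def using shift_decomp[of 1 F1] F10 by simp
  have H0: "fps_nth H 0 = a" using F11 by (simp add: H_def)
  define B where "B = fps_deriv F1"
  have B0: "fps_nth B 0 = a" using F11 by (simp add: B_def)
  define K where "K = fps_shift 1 (fps_deriv B)"
  have CK: "fps_deriv B = fps_X * K" unfolding K_def using shift_decomp[of 1 "fps_deriv B"] F12
    by (simp add: B_def numeral_2_eq_2)
  define E where "E = fps_deriv (fps_deriv B)"
  define W where "W = (fps_X :: complex fps) ^ (n+3)"
  have X9: "(fps_X :: complex fps) ^ (n+9) = fps_X ^ 6 * W" unfolding W_def power_add[symmetric]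
    by (rule arg_cong[where f="\<lambda>k. (fps_X :: complex fps) ^ k"]) simp
  have X8: "(fps_X :: complex fps) ^ (n+8) = fps_X ^ 5 * W" unfolding W_def power_add[symmetric]
    by (rule arg_cong[where f="\<lambda>k. (fps_X :: complex fps) ^ k"]) simp
  have X7: "(fps_X :: complex fps) ^ (n+7) = fps_X ^ 4 * W" unfolding W_def power_add[symmetric]
    by (rule arg_cong[where f="\<lambda>k. (fps_X :: complex fps) ^ k"]) simp
  have X6: "(fps_X :: complex fps) ^ (n+6) = fps_X ^ 3 * W" unfolding W_def power_add[symmetric]
    by (rule arg_cong[where f="\<lambda>k. (fps_X :: complex fps) ^ k"]) simp
  have F2e: "F2 = F1 + D" by (simp add: D_def)
  have f0: "F2 = fps_X * H + fps_X ^ 6 * W * G" using F2e FH DG X9 by simp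
  have f1: "fps_deriv F2 = B + fps_X ^ 5 * W * G1" using F2e D1G X8 by (simp add: B_def)
  have f2: "fps_deriv (fps_deriv F2) = fps_X * K + fps_X ^ 4 * W * G2" using F2e D2G X7 CK
    by (simp add: B_def)
  have f3: "fps_deriv (fps_deriv (fps_deriv F2)) = E + fps_X ^ 3 * W * G3" using F2e D3G X6
    by (simp add: B_def E_def)
  have g0: "F1 = fps_X * H" by (rule FH)
  have g1: "fps_deriv F1 = B" by (simp add: B_def)
  have g2: "fps_deriv (fps_deriv F1) = fps_X * K" using CK by (simp add: B_def)
  have g3: "fps_deriv (fps_deriv (fps_deriv F1)) = E" by (simp add: B_def E_def)
  define Q where "Q = (H + fps_X ^ 5 * W * G) ^ 3 * G3
       + G * ((fps_X * H + fps_X ^ 6 * W * G) ^ 2 + (fps_X * H + fps_X ^ 6 * W * G) * (fps_X * H) + (fps_X * H) ^ 2) * E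
       - 3 * ((H + fps_X ^ 5 * W * G) ^ 2 * (B + fps_X ^ 5 * W * G1) * G2
              + fps_X ^ 2 * (H + fps_X ^ 5 * W * G) ^ 2 * K * G1
              + G * ((fps_X * H + fps_X ^ 6 * W * G) + fps_X * H) * B * (fps_X * K))
       + 2 * ((H + fps_X ^ 5 * W * G) * G1 * ((B + fps_X ^ 5 * W * G1) ^ 2 + (B + fps_X ^ 5 * W * G1) * B + B ^ 2)
              + G * B ^ 3)"
  have "PP F2 - PP F1 = fps_X ^ 6 * W * Q"
    unfolding PP_P4 unfolding P4_cong[OF f0 f1 f2 f3] P4_cong[OF g0 g1 g2 g3] unfolding Q_def P4_def
    by (rule ring_id)
  also have "PP F2 - PP F1 = fps_const (a ^ 3) * Abs_fps (\<lambda>k. 2 ^ k * fps_nth D k)"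
    unfolding e1[symmetric] e2[symmetric] by (simp add: fps_eq_iff D_def algebra_simps)
  finally have main: "fps_const (a ^ 3) * Abs_fps (\<lambda>k. 2 ^ k * fps_nth D k) = fps_X ^ (n+9) * Q"
    unfolding X9 by simp
  have "a ^ 3 * (2 ^ (n+9) * c) = fps_nth Q 0"
    using arg_cong[OF main, of "\<lambda>F. fps_nth F (n+9)"] by (simp add: fps_X_power_mult_nth c_def mn)
  also have "fps_nth Q 0 = a^3 * fps_nth G3 0 - 3 * (a^3 * fps_nth G2 0) + 2 * (a * fps_nth G1 0 * (3 * a^2) + c * a ^ 3)"
    unfolding Q_def using H0 B0 G0 by (simp add: fps_power_zeroth W_def power2_eq_square power3_eq_cube)
  finally have eq: "a ^ 3 * (2 ^ (n+9) * c) = a^3 * fps_nth G3 0 - 3 * (a^3 * fps_nth G2 0) + 2 * (a * fps_nth G1 0 * (3 * a^2) + c * a ^ 3)" .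
  have "(a ^ 3 * c) * of_nat (2^(n+9) + 3*(n+8)*(n+9)) = (a ^ 3 * c) * of_nat ((n+7)*(n+8)*(n+9) + 6*(n+9) + 2)"
    using eq unfolding G10 G20 G30 by (simp add: algebra_simps power2_eq_square power3_eq_cube)
  hence "of_nat (2^(n+9) + 3*(n+8)*(n+9)) = (of_nat ((n+7)*(n+8)*(n+9) + 6*(n+9) + 2) :: complex)"
    using anz cnz by simp
  hence "2^(n+9) + 3*(n+8)*(n+9) = (n+7)*(n+8)*(n+9) + 6*(n+9) + 2" by (simp only: of_nat_eq_iff)
  with nat_ineq[of n] show False by simp
qed


theorem lemma5:
  fixes f1 f2 :: "complex \<Rightarrow> complex"
  assumes "f1 holomorphic_on UNIV" and "f2 holomorphic_on UNIV"
    and "\<And>z. f1 (- z) = - f1 z" and "\<And>z. f2 (- z) = - f2 z"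
    and "deriv f1 0 \<noteq> 0" and "deriv f2 0 \<noteq> 0"
    and "lemma5_eq f1" and "lemma5_eq f2"
    and "\<And>k. k \<le> 8 \<Longrightarrow> (deriv ^^ k) (\<lambda>z. f2 z - f1 z) 0 = 0"
  shows "f2 = f1"
proof -
  define F1 where "F1 = fps_expansion f1 0"
  define F2 where "F2 = fps_expansion f2 0"
  note s1 = single[OF assms(1,3,5,7), folded F1_def]
  note s2 = single[OF assms(2,4,6,8), folded F2_def]
  have dexp: "(\<lambda>z. f2 z - f1 z) has_fps_expansion F2 - F1"
    by (intro has_fps_expansion_diff s1(1) s2(1))
  have low: "fps_nth F2 k = fps_nth F1 k" if "k \<le> 8" for k
    using fps_nth_fps_expansion[OF dexp, of k] assms(9)[OF that] by simp
  have a2: "deriv f2 0 = deriv f1 0" using low[of 1] s1(3) s2(3) by simp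
  have "F2 = F1"
  proof (rule alg[OF s1(2) s1(3) s1(4) assms(5)])
    show "fps_const (deriv f1 0 ^ 3) * Abs_fps (\<lambda>n. 2 ^ n * fps_nth F1 n) = PP F1"
      using s1(5) unfolding PP_def .
    show "fps_const (deriv f1 0 ^ 3) * Abs_fps (\<lambda>n. 2 ^ n * fps_nth F2 n) = PP F2"
      using s2(5) unfolding PP_def a2 .
    show "\<And>k. k \<le> 8 \<Longrightarrow> fps_nth F2 k = fps_nth F1 k" by (rule low)
  qed
  hence d0: "(\<lambda>z. f2 z - f1 z) has_fps_expansion 0" using dexp by simp
  have "f2 z - f1 z = 0" for z
    by (rule has_fps_expansion_0_analytic_continuation[OF d0, of UNIV])
       (auto intro!: holomorphic_intros assms(1,2))
  thus ?thesis by auto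
qed

end
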